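(* Let $\sigma:\mathbb R\to\mathbb R$ be a differentiable activation, $L\geq2$, and let $\mathrm{NN}'(\{m'_l\}_{l=0}^L)$ be a fully-connected network with $M_{\mathrm{wide}}$ parameters that is wider than a fully-connected network $\mathrm{NN}(\{m_l\}_{l=0}^L)$ with $M_{\mathrm{narr}}$ parameters (both with $m_L=m'_L=1$). Then for every function $f^*$ in the function space $\mathcal F_{\mathrm{narr}}$ of the narrower network, $O_{f_{\theta_{\mathrm{wide}}}}(f^* )\leq O_{f_{\theta_{\mathrm{narr}}}}(f^* )\leq M_{\mathrm{narr}}$, where $f_{\theta_{\mathrm{wide}}}$, $f_{\theta_{\mathrm{narr}}}$ denote the wider and the narrower network models.
   Context: A fully-connected network $\mathrm{NN}(\{m_l\}_{l=0}^L)$ with input dimension $m_0=d$ and output dimension $m_L=1$ has parameters $\theta=(W^{[1]},b^{[1]},\dots,W^{[L]},b^{[L]})$ with $W^{[l]}\in\mathbb R^{m_l\times m_{l-1}}$, $b^{[l]}\in\mathbb R^{m_l}$ (identified with a vector in $\mathbb R^M$, $M=\sum_{l=0}^{L-1}(m_l+1)m_{l+1}$), and output $f_\theta(x)=W^{[L]}f^{[L-1]}(x)+b^{[L]}$, where $f^{[0]}(x)=x$ and $f^{[l]}(x)=\sigma(W^{[l]}f^{[l-1]}(x)+b^{[l]})$ for $l\in[L-1]$ ($\sigma$ applied entrywise). Its function space is $\{f_\theta:\theta\in\mathbb R^M\}$. $\mathrm{NN}'(\{m'_l\}_{l=0}^L)$ is wider than $\mathrm{NN}(\{m_l\}_{l=0}^L)$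 if $m'_0=m_0$, $m'_L=m_L$, $m'_l\geq m_l$ for all $l\in[L-1]$, and $\sum_{l=1}^{L-1}(m'_l-m_l)>0$. The loss $\ell:\mathbb R\times\mathbb R\to[0,\infty)$ is continuously differentiable with $\ell(u,v)=0$ iff $u=v$. For a model $h_\theta$ with parameters in $\mathbb R^M$ and $f^*$ in its function space: the target set is $\mathcal M_{f^*}=\{\theta:h_\theta=f^*\}$; a dataset of size $n$ from $f^*$ is $\{(x_i,f^*(x_i))\}_{i=1}^n$ with empirical loss $\frac1n\sum_i\ell(u(x_i),f^*(x_i))$ for a function $u$ (identically $0$ if $n=0$); the tangent hyperplane at $\theta'$ is $\{h(\cdot;\theta')+a^\top\nabla_\theta h(\cdot;\theta'):a\in\mathbb R^M\}$; $f^*$ has $n$-sample LLR-guarantee if there exist a dataset of size $n$ from $f^*$ and $\theta'\in\mathcal M_{f^*}$ such that the set of minimizers of the empirical loss over the tangent hyperplane at $\theta'$ is exactly $\{f^*\}$; the optimistic sample size $O_h(f^* )$ is the smallest $n\geq0$ for which $f^*$ has $n$-sample LLR-guarantee. *)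

theory Defs
  imports "HOL-Analysis.Analysis"
begin

text \<open>Parameters are functions on a
finite coordinate set P (identified with R^M, M = card P; coordinates outside P
are fixed to 0).\<close>

definition param_space :: "'i set \<Rightarrow> ('i \<Rightarrow> real) set" where
  "param_space P = {\<theta>. \<forall>i. i \<notin> P \<longrightarrow> \<theta> i = 0}"

definition in_fun_space :: "(('i \<Rightarrow> real) \<Rightarrow> 'x \<Rightarrow> real) \<Rightarrow> 'i set \<Rightarrow> 'x set \<Rightarrow> ('x \<Rightarrow> real) \<Rightarrow> bool" where
  "in_fun_space h P X f \<longleftrightarrow> (\<exists>\<theta>\<in>param_space P. \<forall>x\<in>X. h \<theta> x = f x)"

definition target_set :: "(('i \<Rightarrow> real) \<Rightarrow> 'x \<Rightarrow> real) \<Rightarrow> 'i set \<Rightarrow> 'x set \<Rightarrow> ('x \<Rightarrow> real) \<Rightarrow> ('i \<Rightarrow> real) set" where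
  "target_set h P X f = {\<theta>\<in>param_space P. \<forall>x\<in>X. h \<theta> x = f x}"

definition param_partial :: "(('i \<Rightarrow> real) \<Rightarrow> 'x \<Rightarrow> real) \<Rightarrow> 'i \<Rightarrow> ('i \<Rightarrow> real) \<Rightarrow> 'x \<Rightarrow> real" where
  "param_partial h i \<theta> x = deriv (\<lambda>t. h (\<theta>(i := \<theta> i + t)) x) 0"

definition tangent_hyperplane :: "(('i \<Rightarrow> real) \<Rightarrow> 'x \<Rightarrow> real) \<Rightarrow> 'i set \<Rightarrow> 'x set \<Rightarrow> ('i \<Rightarrow> real) \<Rightarrow> ('x \<Rightarrow> real) set" where
  "tangent_hyperplane h P X \<theta>' =
     {u. \<exists>a. \<forall>x\<in>X. u x = h \<theta>' x + (\<Sum>i\<in>P. a i * param_partial h i \<theta>' x)}"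

definition emp_loss :: "(real \<Rightarrow> real \<Rightarrow> real) \<Rightarrow> 'x list \<Rightarrow> ('x \<Rightarrow> real) \<Rightarrow> ('x \<Rightarrow> real) \<Rightarrow> real" where
  "emp_loss loss xs f u =
     (if xs = [] then 0 else (\<Sum>x\<leftarrow>xs. loss (u x) (f x)) / real (length xs))"

definition LLR_guarantee :: "(real \<Rightarrow> real \<Rightarrow> real) \<Rightarrow> (('i \<Rightarrow> real) \<Rightarrow> 'x \<Rightarrow> real) \<Rightarrow> 'i set \<Rightarrow> 'x set
     \<Rightarrow> ('x \<Rightarrow> real) \<Rightarrow> nat \<Rightarrow> bool" where
  "LLR_guarantee loss h P X f n \<longleftrightarrow>
     (\<exists>xs. length xs = n \<and> set xs \<subseteq> X \<and>
        (\<exists>\<theta>'\<in>target_set h P X f.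
           \<forall>u\<in>tangent_hyperplane h P X \<theta>'.
             (\<forall>v\<in>tangent_hyperplane h P X \<theta>'. emp_loss loss xs f u \<le> emp_loss loss xs f v)
             \<longleftrightarrow> (\<forall>x\<in>X. u x = f x)))"

definition opt_sample_size :: "(real \<Rightarrow> real \<Rightarrow> real) \<Rightarrow> (('i \<Rightarrow> real) \<Rightarrow> 'x \<Rightarrow> real) \<Rightarrow> 'i set \<Rightarrow> 'x set
     \<Rightarrow> ('x \<Rightarrow> real) \<Rightarrow> nat" where
  "opt_sample_size loss h P X f = (LEAST n. LLR_guarantee loss h P X f n)"

datatype pidx = Wt nat nat nat | Bs nat nat
  \<comment> \<open>Wt l i j = W^[l]_{ij},  Bs l i = b^[l]_i\<close>

definition nn_pidx :: "(nat \<Rightarrow> nat) \<Rightarrow> nat \<Rightarrow> pidx set" where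
  "nn_pidx m L =
     {Wt l i j | l i j. 1 \<le> l \<and> l \<le> L \<and> i < m l \<and> j < m (l - 1)}
   \<union> {Bs l i | l i. 1 \<le> l \<and> l \<le> L \<and> i < m l}"

definition nn_nparams :: "(nat \<Rightarrow> nat) \<Rightarrow> nat \<Rightarrow> nat" where
  "nn_nparams m L = (\<Sum>l<L. (m l + 1) * m (Suc l))"

text \<open>Inputs x in R^d are represented as nat => real vanishing from coordinate d on.\<close>
definition input_dom :: "nat \<Rightarrow> (nat \<Rightarrow> real) set" where
  "input_dom d = {x. \<forall>j\<ge>d. x j = 0}"

fun nn_layer :: "(real \<Rightarrow> real) \<Rightarrow> (nat \<Rightarrow> nat) \<Rightarrow> (pidx \<Rightarrow> real) \<Rightarrow> (nat \<Rightarrow> real) \<Rightarrow> nat \<Rightarrow> (nat \<Rightarrow> real)" where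
  "nn_layer \<sigma> m \<theta> x 0 = x"
| "nn_layer \<sigma> m \<theta> x (Suc l) =
     (\<lambda>i. \<sigma> ((\<Sum>j<m l. \<theta> (Wt (Suc l) i j) * nn_layer \<sigma> m \<theta> x l j) + \<theta> (Bs (Suc l) i)))"

definition nn_out :: "(real \<Rightarrow> real) \<Rightarrow> (nat \<Rightarrow> nat) \<Rightarrow> nat \<Rightarrow> (pidx \<Rightarrow> real) \<Rightarrow> (nat \<Rightarrow> real) \<Rightarrow> real" where
  "nn_out \<sigma> m L \<theta> x =
     (\<Sum>j<m (L - 1). \<theta> (Wt L 0 j) * nn_layer \<sigma> m \<theta> x (L - 1) j) + \<theta> (Bs L 0)"

definition wider :: "(nat \<Rightarrow> nat) \<Rightarrow> (nat \<Rightarrow> nat) \<Rightarrow> nat \<Rightarrow> bool" where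
  "wider m' m L \<longleftrightarrow> m' 0 = m 0 \<and> m' L = m L \<and> (\<forall>l\<in>{1..L-1}. m l \<le> m' l)
     \<and> (\<Sum>l=1..L-1. (m' l - m l)) > 0"

end

theory Submission
  imports Defs
begin

lemma emp_loss_nonneg:
  assumes "\<And>u v. loss u v \<ge> 0"
  shows "emp_loss loss xs f u \<ge> 0"
  unfolding emp_loss_def using assms by (auto intro!: divide_nonneg_nonneg sum_list_nonneg)

lemma emp_loss_zero:
  assumes "\<And>u v. loss u v \<ge> 0" "\<And>u v. loss u v = 0 \<longleftrightarrow> u = v"
  shows "emp_loss loss xs f u = 0 \<longleftrightarrow> (\<forall>x\<in>set xs. u x = f x)"
proof (cases "xs = []")
  case False
  have "sum_list (map (\<lambda>x. loss (u x) (f x)) xs) = 0 \<longleftrightarrow> (\<forall>x\<in>set xs. u x = f x)"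
    by (subst sum_list_nonneg_eq_0_iff) (use assms in auto)
  then show ?thesis using False unfolding emp_loss_def by simp
qed (simp add: emp_loss_def)

lemma LLR_char:
  assumes nn: "\<And>u v. loss u v \<ge> 0" and z: "\<And>u v. loss u v = 0 \<longleftrightarrow> u = v"
    and xs: "set xs \<subseteq> X" and th: "\<theta>' \<in> target_set h P X f"
  shows "(\<forall>u\<in>tangent_hyperplane h P X \<theta>'.
             (\<forall>v\<in>tangent_hyperplane h P X \<theta>'. emp_loss loss xs f u \<le> emp_loss loss xs f v)
             \<longleftrightarrow> (\<forall>x\<in>X. u x = f x))
    \<longleftrightarrow> (\<forall>a. (\<forall>x\<in>set xs. (\<Sum>i\<in>P. a i * param_partial h i \<theta>' x) = 0)
              \<longrightarrow> (\<forall>x\<in>X. (\<Sum>i\<in>P. a i * param_partial h i \<theta>' x) = 0))"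
proof -
  let ?T = "tangent_hyperplane h P X \<theta>'"
  let ?E = "emp_loss loss xs f"
  have hf: "\<forall>x\<in>X. h \<theta>' x = f x" using th by (simp add: target_set_def)
  have fT: "f \<in> ?T" unfolding tangent_hyperplane_def using hf
    by (auto intro!: exI[of _ "\<lambda>_. 0"])
  have Ef: "?E f = 0" using emp_loss_zero[of loss xs f f] nn z by simp
  have min: "(\<forall>v\<in>?T. ?E u \<le> ?E v) \<longleftrightarrow> (\<forall>x\<in>set xs. u x = f x)" if "u \<in> ?T" for u
  proof
    assume "\<forall>v\<in>?T. ?E u \<le> ?E v"
    then have "?E u \<le> 0" using fT Ef by force
    then have "?E u = 0" using emp_loss_nonneg[of loss xs f u] nn by fastforce
    then show "\<forall>x\<in>set xs. u x = f x" using emp_loss_zero[of loss xs f u] nn z by blast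
  next
    assume "\<forall>x\<in>set xs. u x = f x"
    then have "?E u = 0" using emp_loss_zero[of loss xs f u] nn z by blast
    then show "\<forall>v\<in>?T. ?E u \<le> ?E v" using emp_loss_nonneg[of loss xs f] nn by simp
  qed
  show ?thesis
  proof
    assume L: "\<forall>u\<in>?T. (\<forall>v\<in>?T. ?E u \<le> ?E v) \<longleftrightarrow> (\<forall>x\<in>X. u x = f x)"
    show "\<forall>a. (\<forall>x\<in>set xs. (\<Sum>i\<in>P. a i * param_partial h i \<theta>' x) = 0)
              \<longrightarrow> (\<forall>x\<in>X. (\<Sum>i\<in>P. a i * param_partial h i \<theta>' x) = 0)"
    proof (intro allI impI)
      fix a assume A: "\<forall>x\<in>set xs. (\<Sum>i\<in>P. a i * param_partial h i \<theta>' x) = 0"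
      define u where "u x = f x + (\<Sum>i\<in>P. a i * param_partial h i \<theta>' x)" for x
      have uT: "u \<in> ?T" unfolding tangent_hyperplane_def u_def using hf by auto
      have "\<forall>x\<in>set xs. u x = f x" using A by (simp add: u_def)
      then have "\<forall>x\<in>X. u x = f x" using L uT min[OF uT] by blast
      then show "\<forall>x\<in>X. (\<Sum>i\<in>P. a i * param_partial h i \<theta>' x) = 0" by (simp add: u_def)
    qed
  next
    assume R: "\<forall>a. (\<forall>x\<in>set xs. (\<Sum>i\<in>P. a i * param_partial h i \<theta>' x) = 0)
              \<longrightarrow> (\<forall>x\<in>X. (\<Sum>i\<in>P. a i * param_partial h i \<theta>' x) = 0)"
    show "\<forall>u\<in>?T. (\<forall>v\<in>?T. ?E u \<le> ?E v) \<longleftrightarrow> (\<forall>x\<in>X. u x = f x)"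
    proof
      fix u assume uT: "u \<in> ?T"
      then obtain a where a: "\<forall>x\<in>X. u x = h \<theta>' x + (\<Sum>i\<in>P. a i * param_partial h i \<theta>' x)"
        unfolding tangent_hyperplane_def by blast
      have "(\<forall>x\<in>set xs. u x = f x) \<longleftrightarrow> (\<forall>x\<in>X. u x = f x)"
      proof
        assume "\<forall>x\<in>set xs. u x = f x"
        then have "\<forall>x\<in>set xs. (\<Sum>i\<in>P. a i * param_partial h i \<theta>' x) = 0"
          using a hf xs by force
        then have "\<forall>x\<in>X. (\<Sum>i\<in>P. a i * param_partial h i \<theta>' x) = 0" using R by blast
        then show "\<forall>x\<in>X. u x = f x" using a hf by simp
      qed (use xs in blast)
      then show "(\<forall>v\<in>?T. ?E u \<le> ?E v) \<longleftrightarrow> (\<forall>x\<in>X. u x = f x)" using min[OF uT] by simp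
    qed
  qed
qed

lemma fin_dim:
  fixes g :: "'i \<Rightarrow> 'x \<Rightarrow> real"
  assumes "finite P"
  shows "\<exists>S. S \<subseteq> X \<and> finite S \<and> card S \<le> card P \<and>
    (\<forall>a. (\<forall>x\<in>S. (\<Sum>i\<in>P. a i * g i x) = 0) \<longrightarrow> (\<forall>x\<in>X. (\<Sum>i\<in>P. a i * g i x) = 0))"
  using assms
proof (induction P arbitrary: g rule: finite_induct)
  case empty
  then show ?case by (intro exI[of _ "{}"]) auto
next
  case (insert p P)
  show ?case
  proof (cases "\<forall>x\<in>X. g p x = 0")
    case True
    obtain S where S: "S \<subseteq> X" "finite S" "card S \<le> card P"
      "\<forall>a. (\<forall>x\<in>S. (\<Sum>i\<in>P. a i * g i x) = 0) \<longrightarrow> (\<forall>x\<in>X. (\<Sum>i\<in>P. a i * g i x) = 0)"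
      using insert.IH by blast
    show ?thesis
      apply (rule exI[of _ S])
      using S True insert.hyps by (auto simp: subset_iff)
  next
    case False
    then obtain x0 where x0: "x0 \<in> X" "g p x0 \<noteq> 0" by blast
    define g' where "g' i x = g i x - g i x0 / g p x0 * g p x" for i x
    obtain S where S: "S \<subseteq> X" "finite S" "card S \<le> card P"
      "\<forall>a. (\<forall>x\<in>S. (\<Sum>i\<in>P. a i * g' i x) = 0) \<longrightarrow> (\<forall>x\<in>X. (\<Sum>i\<in>P. a i * g' i x) = 0)"
      using insert.IH by blast
    have key: "(\<Sum>i\<in>insert p P. a i * g i x) = (\<Sum>i\<in>P. a i * g' i x)"
      if h0: "(\<Sum>i\<in>insert p P. a i * g i x0) = 0" for a x
    proof -
      have s0: "(\<Sum>i\<in>P. a i * g i x0) = - a p * g p x0" using h0 insert.hyps by simp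
      have "(\<Sum>i\<in>P. a i * g' i x) = (\<Sum>i\<in>P. a i * g i x) - (\<Sum>i\<in>P. a i * g i x0) / g p x0 * g p x"
        unfolding g'_def by (simp add: algebra_simps sum_subtractf sum_distrib_right sum_distrib_left sum_divide_distrib)
      also have "\<dots> = (\<Sum>i\<in>P. a i * g i x) + a p * g p x" using x0(2) by (simp add: s0)
      finally show ?thesis using insert.hyps by simp
    qed
    show ?thesis
    proof (intro exI[of _ "insert x0 S"] conjI allI impI)
      show "insert x0 S \<subseteq> X" using S x0 by auto
      show "finite (insert x0 S)" using S by auto
      show "card (insert x0 S) \<le> card (insert p P)"
        using S insert.hyps by (simp add: card_insert_if)
    next
      fix a assume A: "\<forall>x\<in>insert x0 S. (\<Sum>i\<in>insert p P. a i * g i x) = 0"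
      then have h0: "(\<Sum>i\<in>insert p P. a i * g i x0) = 0" by simp
      have "\<forall>x\<in>S. (\<Sum>i\<in>P. a i * g' i x) = 0" using A key[OF h0] by simp
      then have "\<forall>x\<in>X. (\<Sum>i\<in>P. a i * g' i x) = 0" using S(4) by blast
      then show "\<forall>x\<in>X. (\<Sum>i\<in>insert p P. a i * g i x) = 0" using key[OF h0] by simp
    qed
  qed
qed


fun lay :: "pidx \<Rightarrow> nat" where "lay (Wt l i j) = l" | "lay (Bs l i) = l"
fun neu :: "pidx \<Rightarrow> nat" where "neu (Wt l i j) = i" | "neu (Bs l i) = i"

definition pre :: "(real \<Rightarrow> real) \<Rightarrow> (nat \<Rightarrow> nat) \<Rightarrow> (pidx \<Rightarrow> real) \<Rightarrow> (nat \<Rightarrow> real) \<Rightarrow> nat \<Rightarrow> nat \<Rightarrow> real" where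
  "pre \<sigma> m \<theta> x l i = (\<Sum>j<m (l - 1). \<theta> (Wt l i j) * nn_layer \<sigma> m \<theta> x (l - 1) j) + \<theta> (Bs l i)"

lemma layer_Suc_pre: "nn_layer \<sigma> m \<theta> x (Suc l) i = \<sigma> (pre \<sigma> m \<theta> x (Suc l) i)"
  by (simp add: pre_def)

lemma out_pre: "nn_out \<sigma> m L \<theta> x = pre \<sigma> m \<theta> x L 0"
  by (simp add: pre_def nn_out_def)

lemma Wt_mem: "Wt l i j \<in> nn_pidx m L \<longleftrightarrow> 1 \<le> l \<and> l \<le> L \<and> i < m l \<and> j < m (l - 1)"
  by (auto simp: nn_pidx_def)
lemma Bs_mem: "Bs l i \<in> nn_pidx m L \<longleftrightarrow> 1 \<le> l \<and> l \<le> L \<and> i < m l"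
  by (auto simp: nn_pidx_def)

lemma layer_D:
  assumes "\<And>q. lay q \<le> k \<Longrightarrow> \<theta>1 q = \<theta>2 q"
  shows "nn_layer \<sigma> m \<theta>1 x k = nn_layer \<sigma> m \<theta>2 x k"
  using assms
proof (induction k)
  case (Suc k)
  have IH: "nn_layer \<sigma> m \<theta>1 x k = nn_layer \<sigma> m \<theta>2 x k" using Suc by simp
  show ?case by (rule ext) (simp add: IH Suc.prems)
qed simp

lemma pre_E:
  assumes k1: "1 \<le> k" and ag: "\<And>q. lay q > k \<Longrightarrow> \<theta>1 q = \<theta>2 q"
    and pk: "\<And>i. pre \<sigma> m \<theta>1 x k i = pre \<sigma> m \<theta>2 x k i" and jk: "k \<le> j"
  shows "pre \<sigma> m \<theta>1 x j i = pre \<sigma> m \<theta>2 x j i"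
  using jk
proof (induction j arbitrary: i rule: dec_induct)
  case base then show ?case by (rule pk)
next
  case (step j)
  have "nn_layer \<sigma> m \<theta>1 x j = nn_layer \<sigma> m \<theta>2 x j"
  proof -
    obtain j' where j': "j = Suc j'" using step k1 by (cases j) auto
    show ?thesis unfolding j' by (rule ext) (simp only: layer_Suc_pre step.IH[unfolded j'])
  qed
  moreover have "\<And>i j'. \<theta>1 (Wt (Suc j) i j') = \<theta>2 (Wt (Suc j) i j')" "\<And>i. \<theta>1 (Bs (Suc j) i) = \<theta>2 (Bs (Suc j) i)"
    using ag step by auto
  ultimately show ?case by (simp add: pre_def)
qed

lemma layer_narrow_eq:
  assumes mle: "\<And>l. l \<le> L \<Longrightarrow> m l \<le> m' l" and th: "\<theta> \<in> param_space (nn_pidx m L)"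
  shows "k \<le> L \<Longrightarrow> nn_layer \<sigma> m' \<theta> x k = nn_layer \<sigma> m \<theta> x k"
proof (induction k)
  case (Suc k)
  have IH: "nn_layer \<sigma> m' \<theta> x k = nn_layer \<sigma> m \<theta> x k" using Suc by simp
  have "(\<Sum>j<m' k. \<theta> (Wt (Suc k) i j) * nn_layer \<sigma> m \<theta> x k j) = (\<Sum>j<m k. \<theta> (Wt (Suc k) i j) * nn_layer \<sigma> m \<theta> x k j)" for i
  proof (rule sum.mono_neutral_right)
    show "{..<m k} \<subseteq> {..<m' k}" using mle[of k] Suc by auto
    show "\<forall>j\<in>{..<m' k} - {..<m k}. \<theta> (Wt (Suc k) i j) * nn_layer \<sigma> m \<theta> x k j = 0"
      using th by (auto simp: param_space_def Wt_mem)
  qed simp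
  then show ?case by (intro ext) (simp add: IH)
qed simp

lemma out_narrow_eq:
  assumes mle: "\<And>l. l \<le> L \<Longrightarrow> m l \<le> m' l" and th: "\<theta> \<in> param_space (nn_pidx m L)" and L1: "1 \<le> L"
  shows "nn_out \<sigma> m' L \<theta> x = nn_out \<sigma> m L \<theta> x"
proof -
  have lay: "nn_layer \<sigma> m' \<theta> x (L-1) = nn_layer \<sigma> m \<theta> x (L-1)"
    by (rule layer_narrow_eq[OF mle th]) auto
  have "(\<Sum>j<m' (L-1). \<theta> (Wt L 0 j) * nn_layer \<sigma> m \<theta> x (L-1) j) = (\<Sum>j<m (L-1). \<theta> (Wt L 0 j) * nn_layer \<sigma> m \<theta> x (L-1) j)"
  proof (rule sum.mono_neutral_right)
    show "{..<m (L-1)} \<subseteq> {..<m' (L-1)}" using mle[of "L-1"] by auto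
    show "\<forall>j\<in>{..<m' (L-1)} - {..<m (L-1)}. \<theta> (Wt L 0 j) * nn_layer \<sigma> m \<theta> x (L-1) j = 0"
      using th by (auto simp: param_space_def Wt_mem)
  qed simp
  then show ?thesis unfolding nn_out_def lay by simp
qed

lemma upd_diff: "(\<lambda>s. (\<theta>(q := \<theta> q + s)) r) differentiable (at s0)"
  by (cases "r = q") simp_all

lemma layer_diff:
  assumes sd: "\<And>z. \<sigma> differentiable (at z)"
  shows "(\<lambda>s. nn_layer \<sigma> m (\<theta>(q := \<theta> q + s)) x k j) differentiable (at s0)"
proof (induction k arbitrary: j)
  case 0 then show ?case by simp
next
  case (Suc k)
  show ?case
    apply (simp only: nn_layer.simps)
    apply (rule differentiable_compose[where f=\<sigma>, OF sd])
    apply (intro differentiable_add differentiable_sum ballI finite_lessThan differentiable_mult upd_diff Suc.IH)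
    done
qed

lemma out_diff:
  assumes sd: "\<And>z. \<sigma> differentiable (at z)"
  shows "(\<lambda>s. nn_out \<sigma> m L (\<theta>(q := \<theta> q + s)) x) differentiable (at s0)"
  unfolding nn_out_def
  by (intro differentiable_add differentiable_sum ballI finite_lessThan differentiable_mult upd_diff layer_diff[OF sd])

lemma deriv_scale:
  fixes g :: "real \<Rightarrow> real"
  assumes "g differentiable (at 0)"
  shows "deriv (\<lambda>t. g (c * t)) 0 = c * deriv g 0"
proof -
  have "DERIV g (c * 0) :> deriv g 0" using assms DERIV_deriv_iff_real_differentiable by simp
  moreover have "((\<lambda>t. c * t) has_field_derivative c) (at 0)" by (auto intro!: derivative_eq_intros)
  ultimately have "((g \<circ> (\<lambda>t. c * t)) has_field_derivative deriv g 0 * c) (at 0)"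
    by (rule DERIV_chain)
  then show ?thesis by (simp add: o_def DERIV_imp_deriv mult.commute)
qed



lemma pidx_lay_neu:
  assumes "i \<in> nn_pidx m L"
  shows "1 \<le> lay i \<and> lay i \<le> L \<and> neu i < m (lay i)"
  using assms by (cases i) (auto simp: Wt_mem Bs_mem)

lemma partial_old:
  assumes mle: "\<And>l. l \<le> L \<Longrightarrow> m l \<le> m' l" and th: "\<theta> \<in> param_space (nn_pidx m L)"
    and L1: "1 \<le> L" and i: "i \<in> nn_pidx m L"
  shows "param_partial (nn_out \<sigma> m' L) i \<theta> x = param_partial (nn_out \<sigma> m L) i \<theta> x"
proof -
  have "\<theta>(i := \<theta> i + t) \<in> param_space (nn_pidx m L)" for t
    using th i by (auto simp: param_space_def)
  then have "(\<lambda>t. nn_out \<sigma> m' L (\<theta>(i := \<theta> i + t)) x) = (\<lambda>t. nn_out \<sigma> m L (\<theta>(i := \<theta> i + t)) x)"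
    using out_narrow_eq[where m=m and m'=m' and L=L, OF mle _ L1] by blast
  then show ?thesis by (simp add: param_partial_def)
qed

lemma partial_new1:
  assumes mle: "\<And>l. l \<le> L \<Longrightarrow> m l \<le> m' l" and th: "\<theta> \<in> param_space (nn_pidx m L)"
    and mL: "m' L = m L" and i: "i \<in> nn_pidx m' L" and new: "neu i \<ge> m (lay i)"
  shows "param_partial (nn_out \<sigma> m' L) i \<theta> x = 0"
proof -
  define l where "l = lay i"
  define a where "a = neu i"
  have l1: "1 \<le> l" "l \<le> L" and am: "a < m' l" using pidx_lay_neu[OF i] by (auto simp: l_def a_def)
  have an: "m l \<le> a" using new by (simp add: l_def a_def)
  have lL: "l < L" using l1 am an mL by (cases "l = L") auto
  obtain l0 where l0: "l = Suc l0" using l1 by (cases l) auto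
  have ti: "\<theta> i = 0" using th pidx_lay_neu[of i m L] new by (auto simp: param_space_def l_def a_def)
  have const: "nn_out \<sigma> m' L (\<theta>(i := \<theta> i + t)) x = nn_out \<sigma> m' L \<theta> x" for t
  proof -
    let ?t = "\<theta>(i := \<theta> i + t)"
    have D: "nn_layer \<sigma> m' ?t x l0 = nn_layer \<sigma> m' \<theta> x l0"
      by (rule layer_D) (use l0 l_def in auto)
    have Lj: "nn_layer \<sigma> m' ?t x l j = nn_layer \<sigma> m' \<theta> x l j" if "j \<noteq> a" for j
    proof -
      have "Wt l j j' \<noteq> i" "Bs l j \<noteq> i" for j' using that a_def by (cases i; auto)+
      then show ?thesis unfolding l0 by (simp only: layer_Suc_pre) (simp add: pre_def D)
    qed
    have zero: "\<theta> (Wt (Suc l) i' a) = 0" for i'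
      using th an by (auto simp: param_space_def Wt_mem)
    have P: "pre \<sigma> m' ?t x (Suc l) i' = pre \<sigma> m' \<theta> x (Suc l) i'" for i'
    proof -
      have "Wt (Suc l) i' j \<noteq> i" "Bs (Suc l) i' \<noteq> i" for j using l_def by (cases i; auto)+
      moreover have "(\<Sum>j<m' l. \<theta> (Wt (Suc l) i' j) * nn_layer \<sigma> m' ?t x l j) =
                     (\<Sum>j<m' l. \<theta> (Wt (Suc l) i' j) * nn_layer \<sigma> m' \<theta> x l j)"
        apply (rule sum.cong[OF refl])
        subgoal for j by (cases "j = a") (simp_all add: zero Lj)
        done
      ultimately show ?thesis by (simp add: pre_def)
    qed
    have "pre \<sigma> m' ?t x L 0 = pre \<sigma> m' \<theta> x L 0"
      by (rule pre_E[of "Suc l"]) (use P lL l_def in auto)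
    then show ?thesis by (simp add: out_pre)
  qed
  have "(\<lambda>t. nn_out \<sigma> m' L (\<theta>(i := \<theta> i + t)) x) = (\<lambda>t. nn_out \<sigma> m' L \<theta> x)"
    using const by blast
  then show ?thesis by (simp add: param_partial_def)
qed

lemma partial_new2:
  assumes mle: "\<And>l. l \<le> L \<Longrightarrow> m l \<le> m' l" and th: "\<theta> \<in> param_space (nn_pidx m L)"
    and m0: "m' 0 = m 0" and L1: "1 \<le> L" and sd: "\<And>z. \<sigma> differentiable (at z)"
    and i: "Wt l a b \<in> nn_pidx m' L" and a: "a < m l" and b: "m (l - 1) \<le> b"
  shows "param_partial (nn_out \<sigma> m' L) (Wt l a b) \<theta> x = \<sigma> 0 * param_partial (nn_out \<sigma> m L) (Bs l a) \<theta> x"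
proof -
  let ?i = "Wt l a b"
  have l1: "1 \<le> l" "l \<le> L" and bm: "b < m' (l - 1)" using i by (auto simp: Wt_mem)
  have l2: "l - 1 \<noteq> 0" using bm b m0 by auto
  obtain l0 where l0: "l = Suc (Suc l0)" using l1 l2 by (cases l; cases "l - 1") auto
  have ti: "\<theta> ?i = 0" using th b by (auto simp: param_space_def Wt_mem)
  define g where "g s = nn_out \<sigma> m L (\<theta>(Bs l a := \<theta> (Bs l a) + s)) x" for s
  have eq: "nn_out \<sigma> m' L (\<theta>(?i := \<theta> ?i + t)) x = g (\<sigma> 0 * t)" for t
  proof -
    let ?t = "\<theta>(?i := \<theta> ?i + t)"
    let ?u = "\<theta>(Bs l a := \<theta> (Bs l a) + \<sigma> 0 * t)"
    have Bn: "Bs l a \<in> nn_pidx m L" using a l1 by (simp add: Bs_mem)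
    have uP: "?u \<in> param_space (nn_pidx m L)" using th Bn by (auto simp: param_space_def)
    have lm: "l - 1 = Suc l0" using l0 by simp
    have D1: "nn_layer \<sigma> m' ?t x (l - 1) = nn_layer \<sigma> m' \<theta> x (l - 1)"
      by (rule layer_D) (use l0 in auto)
    have D2: "nn_layer \<sigma> m' ?u x (l - 1) = nn_layer \<sigma> m' \<theta> x (l - 1)"
      by (rule layer_D) (use l0 in auto)
    have Yb: "nn_layer \<sigma> m' \<theta> x (l - 1) b = \<sigma> 0"
    proof -
      have "\<theta> (Wt (Suc l0) b j) = 0" "\<theta> (Bs (Suc l0) b) = 0" for j
        using th b l0 by (auto simp: param_space_def Wt_mem Bs_mem)
      then show ?thesis unfolding lm by simp
    qed
    have P: "pre \<sigma> m' ?t x l i' = pre \<sigma> m' ?u x l i'" for i'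
    proof (cases "i' = a")
      case False
      then show ?thesis unfolding pre_def D1 D2 by simp
    next
      case True
      have "(\<Sum>j<m' (l - 1). ?t (Wt l a j) * nn_layer \<sigma> m' \<theta> x (l - 1) j)
          = (\<Sum>j<m' (l - 1). \<theta> (Wt l a j) * nn_layer \<sigma> m' \<theta> x (l - 1) j
               + (if j = b then t * nn_layer \<sigma> m' \<theta> x (l - 1) j else 0))"
        by (rule sum.cong) (auto simp: algebra_simps)
      also have "\<dots> = (\<Sum>j<m' (l - 1). \<theta> (Wt l a j) * nn_layer \<sigma> m' \<theta> x (l - 1) j) + t * \<sigma> 0"
        using bm Yb by (simp add: sum.distrib)
      finally show ?thesis using True unfolding pre_def D1 D2 by (simp add: algebra_simps)
    qed
    have "pre \<sigma> m' ?t x L 0 = pre \<sigma> m' ?u x L 0"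
      by (rule pre_E[of l]) (use P l1 in auto)
    then have "nn_out \<sigma> m' L ?t x = nn_out \<sigma> m' L ?u x" by (simp add: out_pre)
    also have "\<dots> = nn_out \<sigma> m L ?u x" by (rule out_narrow_eq[where m=m and m'=m' and L=L, OF mle uP L1])
    finally show ?thesis by (simp add: g_def)
  qed
  have gd: "g differentiable (at 0)" unfolding g_def by (rule out_diff[OF sd])
  have "param_partial (nn_out \<sigma> m' L) ?i \<theta> x = deriv (\<lambda>t. g (\<sigma> 0 * t)) 0"
    unfolding param_partial_def eq by simp
  also have "\<dots> = \<sigma> 0 * deriv g 0" by (rule deriv_scale[OF gd])
  moreover have "g = (\<lambda>s. nn_out \<sigma> m L (\<theta>(Bs l a := \<theta> (Bs l a) + s)) x)"
    by (rule ext) (simp add: g_def)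
  ultimately show ?thesis by (simp add: param_partial_def)
qed


definition inspan :: "'x set \<Rightarrow> 'i set \<Rightarrow> ('i \<Rightarrow> 'x \<Rightarrow> real) \<Rightarrow> ('x \<Rightarrow> real) \<Rightarrow> bool" where
  "inspan X P p g \<longleftrightarrow> (\<exists>a. \<forall>x\<in>X. g x = (\<Sum>i\<in>P. a i * p i x))"

lemma inspan_sum:
  assumes "finite I" "\<forall>i\<in>I. inspan X P p (q i)"
  shows "inspan X P p (\<lambda>x. \<Sum>i\<in>I. c i * q i x)"
  using assms
proof (induction I rule: finite_induct)
  case empty
  then show ?case unfolding inspan_def by (intro exI[of _ "\<lambda>_. 0"]) simp
next
  case (insert j I)
  obtain a1 where a1: "\<forall>x\<in>X. q j x = (\<Sum>i\<in>P. a1 i * p i x)" using insert.prems unfolding inspan_def by auto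
  obtain a2 where a2: "\<forall>x\<in>X. (\<Sum>i\<in>I. c i * q i x) = (\<Sum>i\<in>P. a2 i * p i x)"
    using insert.IH insert.prems unfolding inspan_def by auto
  show ?case unfolding inspan_def
  proof (intro exI[of _ "\<lambda>i. c j * a1 i + a2 i"] ballI)
    fix x assume x: "x \<in> X"
    have "(\<Sum>i\<in>insert j I. c i * q i x) = c j * q j x + (\<Sum>i\<in>I. c i * q i x)" using insert.hyps by simp
    also have "\<dots> = c j * (\<Sum>i\<in>P. a1 i * p i x) + (\<Sum>i\<in>P. a2 i * p i x)" using a1 a2 x by simp
    also have "\<dots> = (\<Sum>i\<in>P. (c j * a1 i + a2 i) * p i x)"
      by (simp add: sum_distrib_left sum.distrib algebra_simps)
    finally show "(\<Sum>i\<in>insert j I. c i * q i x) = (\<Sum>i\<in>P. (c j * a1 i + a2 i) * p i x)" .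
  qed
qed

lemma inspan_basis:
  assumes "finite P" "j \<in> P"
  shows "inspan X P p (\<lambda>x. c * p j x)"
  unfolding inspan_def
proof (intro exI[of _ "\<lambda>i. if i = j then c else 0"] ballI)
  fix x
  have "(\<Sum>i\<in>P. (if i = j then c else 0) * p i x) = (\<Sum>i\<in>P. if i = j then c * p j x else 0)"
    by (rule sum.cong) auto
  also have "\<dots> = c * p j x" using assms by simp
  finally show "c * p j x = (\<Sum>i\<in>P. (if i = j then c else 0) * p i x)" by simp
qed

lemma inspan_zero: "inspan X P p (\<lambda>x. 0)"
  unfolding inspan_def by (intro exI[of _ "\<lambda>_. 0"]) simp

lemma pidx_card: "finite (nn_pidx m L) \<and> card (nn_pidx m L) \<le> nn_nparams m L"
proof -
  define A where "A l = (\<lambda>(i,j). Wt (Suc l) i j) ` ({..<m (Suc l)} \<times> {..<m l}) \<union> Bs (Suc l) ` {..<m (Suc l)}" for l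
  have sub: "nn_pidx m L \<subseteq> (\<Union>l<L. A l)"
  proof
    fix q assume q: "q \<in> nn_pidx m L"
    show "q \<in> (\<Union>l<L. A l)"
    proof (cases q)
      case (Wt l i j)
      then have "1 \<le> l" "l \<le> L" "i < m l" "j < m (l - 1)" using q by (auto simp: Wt_mem)
      then show ?thesis using Wt unfolding A_def
        by (intro UN_I[of "l - 1"]) (auto intro!: image_eqI[of _ _ "(i,j)"])
    next
      case (Bs l i)
      then have "1 \<le> l" "l \<le> L" "i < m l" using q by (auto simp: Bs_mem)
      then show ?thesis using Bs unfolding A_def
        by (intro UN_I[of "l - 1"]) auto
    qed
  qed
  have fA: "finite (A l)" for l unfolding A_def by auto
  have cA: "card (A l) \<le> (m l + 1) * m (Suc l)" for l
  proof -
    have "card (A l) \<le> card ((\<lambda>(i,j). Wt (Suc l) i j) ` ({..<m (Suc l)} \<times> {..<m l})) + card (Bs (Suc l) ` {..<m (Suc l)})"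
      unfolding A_def by (rule card_Un_le)
    also have "\<dots> \<le> card ({..<m (Suc l)} \<times> {..<m l}) + card {..<m (Suc l)}"
      by (intro add_mono card_image_le) auto
    also have "\<dots> = (m l + 1) * m (Suc l)" by (simp add: card_cartesian_product algebra_simps)
    finally show ?thesis .
  qed
  have fU: "finite (\<Union>l<L. A l)" using fA by auto
  have "card (nn_pidx m L) \<le> card (\<Union>l<L. A l)" by (rule card_mono[OF fU sub])
  also have "\<dots> \<le> (\<Sum>l<L. card (A l))" by (rule card_UN_le) simp
  also have "\<dots> \<le> (\<Sum>l<L. (m l + 1) * m (Suc l))" by (rule sum_mono[OF cA])
  finally show ?thesis using finite_subset[OF sub fU] by (simp add: nn_nparams_def)
qed

lemma LLR_exists:
  assumes nn: "\<And>u v. loss u v \<ge> 0" and z: "\<And>u v. loss u v = 0 \<longleftrightarrow> u = v"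
    and fin: "finite P" and th: "\<theta>' \<in> target_set h P X f"
  shows "\<exists>n\<le>card P. LLR_guarantee loss h P X f n"
proof -
  obtain S where S: "S \<subseteq> X" "finite S" "card S \<le> card P"
    "\<forall>a. (\<forall>x\<in>S. (\<Sum>i\<in>P. a i * param_partial h i \<theta>' x) = 0) \<longrightarrow> (\<forall>x\<in>X. (\<Sum>i\<in>P. a i * param_partial h i \<theta>' x) = 0)"
    using fin_dim[where g="\<lambda>i x. param_partial h i \<theta>' x" and X=X, OF fin] by blast
  obtain xs where xs: "set xs = S" "distinct xs" using finite_distinct_list[OF S(2)] by blast
  have len: "length xs = card S" using xs distinct_card by metis
  have xsX: "set xs \<subseteq> X" using xs S by simp
  have C: "\<forall>u\<in>tangent_hyperplane h P X \<theta>'.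
             (\<forall>v\<in>tangent_hyperplane h P X \<theta>'. emp_loss loss xs f u \<le> emp_loss loss xs f v)
             \<longleftrightarrow> (\<forall>x\<in>X. u x = f x)"
    using LLR_char[of loss xs X \<theta>' h P f, OF nn z xsX th] S(4) xs(1) by simp
  have "LLR_guarantee loss h P X f (card S)"
    unfolding LLR_guarantee_def using len xsX th C by blast
  then show ?thesis using S(3) by blast
qed


lemma wide_inspan:
  assumes mle: "\<And>l. l \<le> L \<Longrightarrow> m l \<le> m' l" and th: "\<theta> \<in> param_space (nn_pidx m L)"
    and m0: "m' 0 = m 0" and mL: "m' L = m L" and L1: "1 \<le> L" and sd: "\<And>z. \<sigma> differentiable (at z)"
    and i: "i \<in> nn_pidx m' L"
  shows "inspan X (nn_pidx m L) (\<lambda>j x. param_partial (nn_out \<sigma> m L) j \<theta> x)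
           (\<lambda>x. param_partial (nn_out \<sigma> m' L) i \<theta> x)"
proof -
  have fin: "finite (nn_pidx m L)" using pidx_card by blast
  show ?thesis
  proof (cases "i \<in> nn_pidx m L")
    case True
    have "inspan X (nn_pidx m L) (\<lambda>j x. param_partial (nn_out \<sigma> m L) j \<theta> x)
           (\<lambda>x. 1 * param_partial (nn_out \<sigma> m L) i \<theta> x)"
      by (rule inspan_basis[OF fin True])
    then show ?thesis using partial_old[OF mle th L1 True] by simp
  next
    case False
    show ?thesis
    proof (cases "neu i \<ge> m (lay i)")
      case True
      then show ?thesis using partial_new1[where m=m and m'=m' and L=L, OF mle th mL i True] inspan_zero by simp
    next
      case nl: False
      then obtain l a b where ieq: "i = Wt l a b" and a: "a < m l" and b: "m (l - 1) \<le> b"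
        using False i by (cases i) (auto simp: Wt_mem Bs_mem not_le)
      have l1: "1 \<le> l" "l \<le> L" using i ieq by (auto simp: Wt_mem)
      have Bn: "Bs l a \<in> nn_pidx m L" using a l1 by (simp add: Bs_mem)
      have "inspan X (nn_pidx m L) (\<lambda>j x. param_partial (nn_out \<sigma> m L) j \<theta> x)
           (\<lambda>x. \<sigma> 0 * param_partial (nn_out \<sigma> m L) (Bs l a) \<theta> x)"
        by (rule inspan_basis[OF fin Bn])
      then show ?thesis
        using partial_new2[where m=m and m'=m' and L=L, OF mle th m0 L1 sd i[unfolded ieq] a b] ieq by simp
    qed
  qed
qed

theorem mainTheorem11:
  fixes \<sigma> :: "real \<Rightarrow> real" and loss :: "real \<Rightarrow> real \<Rightarrow> real"
    and m m' :: "nat \<Rightarrow> nat" and L :: nat and fstar :: "(nat \<Rightarrow> real) \<Rightarrow> real"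
  assumes sigma_diff: "\<And>z. \<sigma> differentiable (at z)"
    and loss_C1: "\<exists>D1 D2. continuous_on UNIV D1 \<and> continuous_on UNIV D2 \<and>
          (\<forall>z. ((\<lambda>p. loss (fst p) (snd p)) has_derivative
                 (\<lambda>q. D1 z * fst q + D2 z * snd q)) (at z))"
    and loss_nonneg: "\<And>u v. loss u v \<ge> 0"
    and loss_zero: "\<And>u v. loss u v = 0 \<longleftrightarrow> u = v"
    and L2: "L \<ge> 2"
    and out1: "m L = 1" "m' L = 1"
    and wide: "wider m' m L"
    and fstar_in: "in_fun_space (nn_out \<sigma> m L) (nn_pidx m L) (input_dom (m 0)) fstar"
  shows "(\<exists>n. LLR_guarantee loss (nn_out \<sigma> m' L) (nn_pidx m' L) (input_dom (m 0)) fstar n)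
       \<and> (\<exists>n. LLR_guarantee loss (nn_out \<sigma> m L) (nn_pidx m L) (input_dom (m 0)) fstar n)
       \<and> opt_sample_size loss (nn_out \<sigma> m' L) (nn_pidx m' L) (input_dom (m 0)) fstar
           \<le> opt_sample_size loss (nn_out \<sigma> m L) (nn_pidx m L) (input_dom (m 0)) fstar
       \<and> opt_sample_size loss (nn_out \<sigma> m L) (nn_pidx m L) (input_dom (m 0)) fstar
           \<le> nn_nparams m L"
proof -
  let ?X = "input_dom (m 0)"
  let ?Pn = "nn_pidx m L" and ?Pw = "nn_pidx m' L"
  let ?hn = "nn_out \<sigma> m L" and ?hw = "nn_out \<sigma> m' L"
  have m0: "m' 0 = m 0" and mL: "m' L = m L" using wide out1 by (auto simp: wider_def)
  have mle: "m l \<le> m' l" if "l \<le> L" for l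
  proof -
    have "l = 0 \<or> l = L \<or> l \<in> {1..L-1}" using that by auto
    then show ?thesis using wide m0 mL unfolding wider_def by auto
  qed
  have L1: "1 \<le> L" using L2 by simp
  have finn: "finite ?Pn" and cardn: "card ?Pn \<le> nn_nparams m L" using pidx_card by blast+
  have finw: "finite ?Pw" using pidx_card by blast
  have sub: "?Pn \<subseteq> ?Pw"
  proof
    fix q assume q: "q \<in> ?Pn"
    show "q \<in> ?Pw"
    proof (cases q)
      case (Wt l i j)
      then have "1 \<le> l" "l \<le> L" "i < m l" "j < m (l - 1)" using q by (auto simp: Wt_mem)
      moreover have "m (l - 1) \<le> m' (l - 1)" using mle[of "l - 1"] \<open>l \<le> L\<close> by simp
      ultimately show ?thesis using Wt mle[of l] by (auto simp: Wt_mem)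
    next
      case (Bs l i)
      then show ?thesis using q mle[of l] by (auto simp: Bs_mem)
    qed
  qed
  have psub: "param_space ?Pn \<subseteq> param_space ?Pw" using sub by (auto simp: param_space_def)
  have tgt: "\<theta> \<in> target_set ?hw ?Pw ?X fstar" if "\<theta> \<in> target_set ?hn ?Pn ?X fstar" for \<theta>
    using that psub out_narrow_eq[where m=m and m'=m' and L=L, OF mle _ L1]
    by (auto simp: target_set_def)
  obtain \<theta>0 where t0: "\<theta>0 \<in> target_set ?hn ?Pn ?X fstar"
    using fstar_in by (auto simp: in_fun_space_def target_set_def)
  obtain nn where nn: "nn \<le> card ?Pn" "LLR_guarantee loss ?hn ?Pn ?X fstar nn"
    using LLR_exists[OF loss_nonneg loss_zero finn t0] by blast
  obtain nw where nw: "LLR_guarantee loss ?hw ?Pw ?X fstar nw"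
    using LLR_exists[OF loss_nonneg loss_zero finw tgt[OF t0]] by blast
  have le2: "opt_sample_size loss ?hn ?Pn ?X fstar \<le> nn_nparams m L"
    unfolding opt_sample_size_def using Least_le[where P="LLR_guarantee loss ?hn ?Pn ?X fstar", OF nn(2)] nn(1) cardn by linarith
  define n0 where "n0 = opt_sample_size loss ?hn ?Pn ?X fstar"
  have G0: "LLR_guarantee loss ?hn ?Pn ?X fstar n0"
    unfolding n0_def opt_sample_size_def by (rule LeastI[where P="LLR_guarantee loss ?hn ?Pn ?X fstar", OF nn(2)])
  then obtain xs \<theta>' where xs: "length xs = n0" "set xs \<subseteq> ?X" and th': "\<theta>' \<in> target_set ?hn ?Pn ?X fstar"
    and C: "\<forall>u\<in>tangent_hyperplane ?hn ?Pn ?X \<theta>'.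
             (\<forall>v\<in>tangent_hyperplane ?hn ?Pn ?X \<theta>'. emp_loss loss xs fstar u \<le> emp_loss loss xs fstar v)
             \<longleftrightarrow> (\<forall>x\<in>?X. u x = fstar x)"
    unfolding LLR_guarantee_def by blast
  have An: "\<forall>a. (\<forall>x\<in>set xs. (\<Sum>i\<in>?Pn. a i * param_partial ?hn i \<theta>' x) = 0)
              \<longrightarrow> (\<forall>x\<in>?X. (\<Sum>i\<in>?Pn. a i * param_partial ?hn i \<theta>' x) = 0)"
    using LLR_char[of loss xs ?X \<theta>' ?hn ?Pn fstar, OF loss_nonneg loss_zero xs(2) th'] C by blast
  have thP: "\<theta>' \<in> param_space ?Pn" using th' by (simp add: target_set_def)
  have Aw: "\<forall>a. (\<forall>x\<in>set xs. (\<Sum>i\<in>?Pw. a i * param_partial ?hw i \<theta>' x) = 0)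
              \<longrightarrow> (\<forall>x\<in>?X. (\<Sum>i\<in>?Pw. a i * param_partial ?hw i \<theta>' x) = 0)"
  proof (intro allI impI)
    fix a assume A: "\<forall>x\<in>set xs. (\<Sum>i\<in>?Pw. a i * param_partial ?hw i \<theta>' x) = 0"
    have "inspan ?X ?Pn (\<lambda>j x. param_partial ?hn j \<theta>' x) (\<lambda>x. \<Sum>i\<in>?Pw. a i * param_partial ?hw i \<theta>' x)"
      by (rule inspan_sum[OF finw]) (use wide_inspan[where m=m and m'=m' and L=L, OF mle thP m0 mL L1 sigma_diff] in blast)
    then obtain b where b: "\<forall>x\<in>?X. (\<Sum>i\<in>?Pw. a i * param_partial ?hw i \<theta>' x) = (\<Sum>i\<in>?Pn. b i * param_partial ?hn i \<theta>' x)"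
      unfolding inspan_def by blast
    have "\<forall>x\<in>set xs. (\<Sum>i\<in>?Pn. b i * param_partial ?hn i \<theta>' x) = 0"
    proof
      fix x assume x: "x \<in> set xs"
      then have "x \<in> ?X" using xs(2) by blast
      then have e1: "(\<Sum>i\<in>?Pw. a i * param_partial ?hw i \<theta>' x) = (\<Sum>i\<in>?Pn. b i * param_partial ?hn i \<theta>' x)"
        using b by blast
      have e2: "(\<Sum>i\<in>?Pw. a i * param_partial ?hw i \<theta>' x) = 0" using A x by blast
      show "(\<Sum>i\<in>?Pn. b i * param_partial ?hn i \<theta>' x) = 0" using e1 e2 by linarith
    qed
    then have "\<forall>x\<in>?X. (\<Sum>i\<in>?Pn. b i * param_partial ?hn i \<theta>' x) = 0" using An by blast
    then show "\<forall>x\<in>?X. (\<Sum>i\<in>?Pw. a i * param_partial ?hw i \<theta>' x) = 0" using b by simp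
  qed
  have th'w: "\<theta>' \<in> target_set ?hw ?Pw ?X fstar" by (rule tgt[OF th'])
  have Cw: "\<forall>u\<in>tangent_hyperplane ?hw ?Pw ?X \<theta>'.
             (\<forall>v\<in>tangent_hyperplane ?hw ?Pw ?X \<theta>'. emp_loss loss xs fstar u \<le> emp_loss loss xs fstar v)
             \<longleftrightarrow> (\<forall>x\<in>?X. u x = fstar x)"
    using LLR_char[of loss xs ?X \<theta>' ?hw ?Pw fstar, OF loss_nonneg loss_zero xs(2) th'w] Aw by blast
  have Gw: "LLR_guarantee loss ?hw ?Pw ?X fstar n0"
    unfolding LLR_guarantee_def using xs th'w Cw by blast
  have le1: "opt_sample_size loss ?hw ?Pw ?X fstar \<le> n0"
    unfolding opt_sample_size_def by (rule Least_le[where P="LLR_guarantee loss ?hw ?Pw ?X fstar", OF Gw])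
  show ?thesis using nw nn(2) le1 le2 n0_def by blast
qed

end
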